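(* Let $N\ge 2$ be an integer, let $T\ge 0$ be a real number, and let $\hat{\boldsymbol{A}}=(\hat A_1,\dots,\hat A_N)$, $\hat{\boldsymbol{B}}=(\hat B_1,\dots,\hat B_N)$ be vectors with $\hat A_i\ge 0$, $\hat B_i\ge 0$ for all $i$ and $\sum_{i=1}^N\hat A_i=\sum_{i=1}^N\hat B_i=T$. Put $\hat S_i=\hat A_i+\hat B_i$. Suppose $\hat S_i\le T$ for all $i=1,\dots,N$. Then $\hat L_{\min}=0$; that is, there exists an $N\times N$ real matrix $\hat{\boldsymbol{P}}=(\hat p_{i,j})$ with $\hat p_{i,i}=0$ for all $i$, $\hat p_{i,j}\ge 0$ for all $i,j$, $\sum_{i,j}\hat p_{i,j}=T$, such that $$\hat L=\sum_{i=1}^N\Big(\sum_{j=1}^N\hat p_{i,j}-\hat A_i\Big)^2+\sum_{j=1}^N\Big(\sum_{i=1}^N\hat p_{i,j}-\hat B_j\Big)^2=0,$$ i.e. $\sum_j\hat p_{i,j}=\hat A_i$ for all $i$ and $\sum_i\hat p_{i,j}=\hat B_j$ for all $j$.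
   Context: Here $\hat L_{\min}$ denotes the minimum of $\hat L$ over all $N\times N$ matrices $\hat{\boldsymbol P}$ with zero diagonal, nonnegative entries and total entry sum $T$. $T$ is called the total preference and $\hat S_i$ the popularity of arm $i$. *)

theory Defs
  imports Main Complex_Main
begin

definition Lhat :: "nat \<Rightarrow> (nat \<Rightarrow> real) \<Rightarrow> (nat \<Rightarrow> real) \<Rightarrow> (nat \<Rightarrow> nat \<Rightarrow> real) \<Rightarrow> real" where
  "Lhat N A B P =
     (\<Sum>i<N. ((\<Sum>j<N. P i j) - A i)^2) + (\<Sum>j<N. ((\<Sum>i<N. P i j) - B j)^2)"

end

theory Submission
  imports Defs
begin

definition ov :: "real \<Rightarrow> real \<Rightarrow> real \<Rightarrow> real \<Rightarrow> real" where
  "ov x y u v = max 0 (min y v - max x u)"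

lemma ov_nonneg: "ov x y u v \<ge> 0" unfolding ov_def by simp

lemma ov_sym: "ov x y u v = ov u v x y" unfolding ov_def by (simp add: min.commute max.commute)

lemma ov_add: "x \<le> y \<Longrightarrow> u \<le> v \<Longrightarrow> v \<le> w \<Longrightarrow> ov x y u v + ov x y v w = ov x y u w"
  unfolding ov_def by (simp add: max_def min_def)

lemma ov_contain: "x \<le> y \<Longrightarrow> u \<le> x \<Longrightarrow> y \<le> v \<Longrightarrow> ov x y u v = y - x"
  unfolding ov_def by (simp add: max_def min_def)

lemma ov_shift: "ov (x+T) (y+T) u v = ov x y (u-T) (v-T)"
  unfolding ov_def by (simp add: max_def min_def)

lemma ov_tele:
  assumes "x \<le> y" "\<And>j. j < n \<Longrightarrow> c j \<le> c (Suc j)"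
  shows "(\<Sum>j<n. ov x y (c j) (c (Suc j))) = ov x y (c 0) (c n)"
  using assms(2)
proof (induction n)
  case 0 then show ?case unfolding ov_def by simp
next
  case (Suc n)
  note step = Suc.prems
  have mono: "c 0 \<le> c n"
  proof -
    have "\<forall>k\<le>n. c 0 \<le> c k"
    proof (intro allI impI)
      fix k assume "k \<le> n" then show "c 0 \<le> c k"
      proof (induction k)
        case 0 then show ?case by simp
      next
        case (Suc k)
        then have "c 0 \<le> c k" by simp
        moreover have "c k \<le> c (Suc k)" using step Suc.prems by simp
        ultimately show ?case by linarith
      qed
    qed
    then show ?thesis by simp
  qed
  have "(\<Sum>j<Suc n. ov x y (c j) (c (Suc j))) = ov x y (c 0) (c n) + ov x y (c n) (c (Suc n))"
    using Suc by simp
  also have "\<dots> = ov x y (c 0) (c (Suc n))"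
    using ov_add[OF assms(1) mono Suc.prems[of n]] by simp
  finally show ?case .
qed

lemma ov_tele2:
  assumes "u \<le> v" "\<And>j. j < n \<Longrightarrow> c j \<le> c (Suc j)"
  shows "(\<Sum>j<n. ov (c j) (c (Suc j)) u v) = ov (c 0) (c n) u v"
  using ov_tele[of u v n c] assms by (simp add: ov_sym)

theorem lemma2p1:
  fixes N :: nat and T :: real and A B :: "nat \<Rightarrow> real"
  assumes "N \<ge> 2" and "T \<ge> 0"
    and "\<And>i. i < N \<Longrightarrow> A i \<ge> 0" and "\<And>i. i < N \<Longrightarrow> B i \<ge> 0"
    and "(\<Sum>i<N. A i) = T" and "(\<Sum>i<N. B i) = T"
    and "\<And>i. i < N \<Longrightarrow> A i + B i \<le> T"
  shows "\<exists>P :: nat \<Rightarrow> nat \<Rightarrow> real.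
           (\<forall>i<N. P i i = 0) \<and> (\<forall>i<N. \<forall>j<N. P i j \<ge> 0) \<and>
           (\<Sum>i<N. \<Sum>j<N. P i j) = T \<and>
           Lhat N A B P = 0 \<and>
           (\<forall>i<N. (\<Sum>j<N. P i j) = A i) \<and> (\<forall>j<N. (\<Sum>i<N. P i j) = B j)"
proof -
  define a where "a k = (\<Sum>m<k. A m)" for k
  define b where "b k = (\<Sum>m<k. B m)" for k
  have amono: "a i \<le> a k" if "i \<le> k" "k \<le> N" for i k
  proof -
    have "a k = a i + (\<Sum>m\<in>{i..<k}. A m)" unfolding a_def
      using that by (metis atLeast0LessThan sum.atLeastLessThan_concat zero_le)
    moreover have "(\<Sum>m\<in>{i..<k}. A m) \<ge> 0" using that assms(3) by (intro sum_nonneg) auto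
    ultimately show ?thesis by simp
  qed
  have bmono: "b i \<le> b k" if "i \<le> k" "k \<le> N" for i k
  proof -
    have "b k = b i + (\<Sum>m\<in>{i..<k}. B m)" unfolding b_def
      using that by (metis atLeast0LessThan sum.atLeastLessThan_concat zero_le)
    moreover have "(\<Sum>m\<in>{i..<k}. B m) \<ge> 0" using that assms(4) by (intro sum_nonneg) auto
    ultimately show ?thesis by simp
  qed
  have a0: "a 0 = 0" and b0: "b 0 = 0" unfolding a_def b_def by simp_all
  have aN: "a N = T" and bN: "b N = T" unfolding a_def b_def using assms(5,6) by simp_all
  have aS: "a (Suc i) = a i + A i" for i unfolding a_def by simp
  have bS: "b (Suc i) = b i + B i" for i unfolding b_def by simp
  have arng: "0 \<le> a i \<and> a i \<le> T" if "i \<le> N" for i using amono[of 0 i] amono[of i N] that a0 aN by simp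
  have brng: "0 \<le> b i \<and> b i \<le> T" if "i \<le> N" for i using bmono[of 0 i] bmono[of i N] that b0 bN by simp
  define s where "s = Max ((\<lambda>k. a (Suc k) - b k) ` {..<N})"
  have fin: "finite ((\<lambda>k. a (Suc k) - b k) ` {..<N})" by simp
  have ne: "(\<lambda>k. a (Suc k) - b k) ` {..<N} \<noteq> {}" using assms(1) by (simp add: lessThan_empty_iff)
  have s_ge: "a (Suc k) - b k \<le> s" if "k < N" for k
    unfolding s_def using that fin by (intro Max_ge) auto
  obtain k0 where k0: "k0 < N" "s = a (Suc k0) - b k0"
    using Max_in[OF fin ne] unfolding s_def by auto
  have key: "a (Suc k) - b k + b (Suc i) - a i \<le> T" if "k < N" "i < N" for k i
  proof (cases "k < i")
    case True
    then show ?thesis using amono[of "Suc k" i] brng[of "Suc i"] brng[of k] that by simp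
  next
    case False
    show ?thesis
    proof (cases "k = i")
      case True then show ?thesis using aS bS assms(7)[of i] that by simp
    next
      case False2: False
      with False have "i < k" by simp
      then show ?thesis using bmono[of "Suc i" k] arng[of "Suc k"] arng[of i] that by simp
    qed
  qed
  have s_le: "s \<le> T + a i - b (Suc i)" if "i < N" for i
    using key[OF k0(1) that] k0(2) by simp
  have s0: "0 \<le> s" using s_ge[of 0] assms(1) a0 b0 aS assms(3)[of 0] by simp
  have sT: "s \<le> T" using k0 arng[of "Suc k0"] brng[of k0] by simp
  define P where "P i j = ov (a i) (a (Suc i)) (b j + s) (b (Suc j) + s)
      + ov (a i + T) (a (Suc i) + T) (b j + s) (b (Suc j) + s)" for i j
  have diag: "P i i = 0" if "i < N" for i
  proof -
    have "ov (a i) (a (Suc i)) (b i + s) (b (Suc i) + s) = 0"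
      using s_ge[OF that] unfolding ov_def by (simp add: max_def min_def)
    moreover have "ov (a i + T) (a (Suc i) + T) (b i + s) (b (Suc i) + s) = 0"
      using s_le[OF that] unfolding ov_def by (simp add: max_def min_def)
    ultimately show ?thesis unfolding P_def by simp
  qed
  have pos: "P i j \<ge> 0" for i j unfolding P_def using ov_nonneg by (simp add: add_nonneg_nonneg)
  have bm: "b j + s \<le> b (Suc j) + s" if "j < N" for j using bmono[of j "Suc j"] that by simp
  have bm2: "b j + s - T \<le> b (Suc j) + s - T" if "j < N" for j using bmono[of j "Suc j"] that by simp
  have am: "a j \<le> a (Suc j)" if "j < N" for j using amono[of j "Suc j"] that by simp
  have am2: "a j + T \<le> a (Suc j) + T" if "j < N" for j using amono[of j "Suc j"] that by simp
  have row: "(\<Sum>j<N. P i j) = A i" if "i < N" for i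
  proof -
    have r1: "(\<Sum>j<N. ov (a i) (a (Suc i)) (b j + s) (b (Suc j) + s)) = ov (a i) (a (Suc i)) s (T + s)"
      using ov_tele[of "a i" "a (Suc i)" N "\<lambda>j. b j + s"] am[OF that] bm b0 bN by simp
    have r2: "(\<Sum>j<N. ov (a i + T) (a (Suc i) + T) (b j + s) (b (Suc j) + s))
        = (\<Sum>j<N. ov (a i) (a (Suc i)) (b j + s - T) (b (Suc j) + s - T))"
      by (simp add: ov_shift)
    also have "\<dots> = ov (a i) (a (Suc i)) (s - T) s"
      using ov_tele[of "a i" "a (Suc i)" N "\<lambda>j. b j + s - T"] am[OF that] bm2 b0 bN by simp
    finally have r2: "(\<Sum>j<N. ov (a i + T) (a (Suc i) + T) (b j + s) (b (Suc j) + s)) = ov (a i) (a (Suc i)) (s - T) s" .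
    have "(\<Sum>j<N. P i j) = ov (a i) (a (Suc i)) (s - T) s + ov (a i) (a (Suc i)) s (T + s)"
      unfolding P_def sum.distrib r1 r2 by simp
    also have "\<dots> = ov (a i) (a (Suc i)) (s - T) (T + s)"
      using ov_add[of "a i" "a (Suc i)" "s - T" s "T + s"] am[OF that] assms(2) by simp
    also have "\<dots> = A i"
      using ov_contain[of "a i" "a (Suc i)" "s - T" "T + s"] am[OF that] arng[of i] arng[of "Suc i"] that s0 sT aS
      by simp
    finally show ?thesis .
  qed
  have col: "(\<Sum>i<N. P i j) = B j" if "j < N" for j
  proof -
    have c1: "(\<Sum>i<N. ov (a i) (a (Suc i)) (b j + s) (b (Suc j) + s)) = ov 0 T (b j + s) (b (Suc j) + s)"
      using ov_tele2[of "b j + s" "b (Suc j) + s" N a] am bm[OF that] a0 aN by simp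
    have c2: "(\<Sum>i<N. ov (a i + T) (a (Suc i) + T) (b j + s) (b (Suc j) + s)) = ov T (T + T) (b j + s) (b (Suc j) + s)"
      using ov_tele2[of "b j + s" "b (Suc j) + s" N "\<lambda>i. a i + T"] am2 bm[OF that] a0 aN by simp
    have "(\<Sum>i<N. P i j) = ov 0 T (b j + s) (b (Suc j) + s) + ov T (T + T) (b j + s) (b (Suc j) + s)"
      unfolding P_def sum.distrib c1 c2 by simp
    also have "\<dots> = ov 0 (T + T) (b j + s) (b (Suc j) + s)"
      using ov_add[of "b j + s" "b (Suc j) + s" 0 T "T + T"] bm[OF that] assms(2) by (simp add: ov_sym)
    also have "\<dots> = B j"
      using ov_contain[of "b j + s" "b (Suc j) + s" 0 "T + T"] bm[OF that] brng[of j] brng[of "Suc j"] that s0 sT bS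
      by (simp add: ov_sym)
    finally show ?thesis .
  qed
  have tot: "(\<Sum>i<N. \<Sum>j<N. P i j) = T" using row assms(5) by simp
  have L: "Lhat N A B P = 0" unfolding Lhat_def using row col by simp
  show ?thesis using diag pos tot L row col by blast
qed

end
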